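(* Let $t\ge 3$. Consider a position in the Strong Ramsey game $\mathcal{R}(K_{\aleph_0}^{(3)}, K^{(3)}_{2,t+1}(t-2))$ in which $P_2$ has claimed all edges of a copy of $K^{(3)}_{2,t}(t-2)$ with main vertices $x,y$ and center $c$, and suppose that (i) $P_1$ does not have a threat; (ii) $P_1$ has not claimed all edges of a copy of $K_{2,t}^{(3)}$ whose center is $c$ and one of whose main vertices is $x$; (iii) $P_1$ has not claimed all edges of a copy of $K_{2,t}^{(3)}$ whose center is $x$ and one of whose main vertices is $c$. If it is $P_2$'s turn, then $P_2$ has a strategy from this position guaranteeing that $P_1$ never claims all edges of a copy of $K^{(3)}_{2,t+1}(t-2)$ (a drawing strategy).
   Context: Strong Ramsey game $\mathcal{R}(B,G)$: players $P_1$, $P_2$ alternately claim unclaimed edges of the $k$-uniform hypergraph $B$, $P_1$ first; the first to claim all edges of a copy of the finite $k$-uniform hypergraph $G$ wins; if nobody does so in finitely many moves the game is a draw. $K_{\aleph_0}^{(3)}$ is the complete $3$-uniform hypergraph on a countably infinite vertex set. For $s\ge0$, $t\ge3$, $K_{2,t}(s)$ is the graph obtained from $K_{2,t}$ by identifying the center of a star with $s$ leaves (the leaves being new vertices) with one of the two vertices of degree $t$. For a graph $H$, $H^{(3)}$ is the $3$-uniform hypergraph obtained by adding one fixed new vertex (the center) to every edge of $H$. Main vertices of $K_{2,t}(s)^{(3)}$ and $K_{2,t}^{(3)}$: the vertices of degree at least $3$ in the underlying graph, i.e. the two vertices of the part of size $2$ of $K_{2,t}$. $P_1$ has a threat if she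 has claimed all edges of a copy of $K^{(3)}_{2,t+1}(t-2)$ minus one edge $e$, where the edge of the board corresponding to $e$ is claimed by neither player. *)

theory Defs
  imports Main
begin

(* Abstract vertices for the small (hyper)graphs:
   Cen = the added centre vertex of H^(3); MA, MB = the two vertices of the part of
   size 2 of K_{2,t} (the main vertices); Lf i = the t vertices of the other part;
   St j = the s new leaves of the star, whose centre is identified with MA. *)
datatype kv = Cen | MA | MB | Lf nat | St nat

definition K2ts :: "nat \<Rightarrow> nat \<Rightarrow> kv set set" where
  "K2ts t s = {{MA, Lf i} | i. i < t} \<union> {{MB, Lf i} | i. i < t} \<union> {{MA, St j} | j. j < s}"

(* H^(3): add the fixed new vertex Cen to every edge of H *)
definition cone3 :: "kv set set \<Rightarrow> kv set set" where
  "cone3 H = insert Cen ` H"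

definition board_edges :: "nat set set" where
  "board_edges = {e. card e = 3}"

definition copy_edges :: "kv set set \<Rightarrow> (kv \<Rightarrow> nat) \<Rightarrow> nat set set" where
  "copy_edges G f = (\<lambda>e. f ` e) ` G"

definition has_copy :: "kv set set \<Rightarrow> nat set set \<Rightarrow> bool" where
  "has_copy G X \<longleftrightarrow> (\<exists>f. inj_on f (\<Union>G) \<and> copy_edges G f \<subseteq> X)"

definition threat :: "nat \<Rightarrow> nat set set \<Rightarrow> nat set set \<Rightarrow> bool" where
  "threat t A B \<longleftrightarrow> (\<exists>f e. inj_on f (\<Union>(cone3 (K2ts (t+1) (t-2))))
      \<and> e \<in> copy_edges (cone3 (K2ts (t+1) (t-2))) f
      \<and> copy_edges (cone3 (K2ts (t+1) (t-2))) f - {e} \<subseteq> A \<and> e \<notin> A \<and> e \<notin> B)"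

(* Game continued from the position (A = P1's edges, B = P2's edges), P2 to move.
   sigma maps the list of P1's moves made since the position to P2's next move,
   so P2's n-th move (n = 0,1,...) is sigma [a 0, ..., a (n-1)], and P1's n-th move a n
   is made after it.  sigma is a drawing strategy for P2 if, against every legal sequence
   of P1 moves, all P2 moves are legal and whenever P1 owns a copy of G after her n-th
   move, P2 already owned a copy of G (i.e. P2 had won first and the game had ended). *)
definition drawing_strategy_P2 ::
  "kv set set \<Rightarrow> nat set set \<Rightarrow> nat set set \<Rightarrow> (nat set list \<Rightarrow> nat set) \<Rightarrow> bool" where
  "drawing_strategy_P2 G A B \<sigma> \<longleftrightarrow>
     (\<forall>a :: nat \<Rightarrow> nat set.
        let m = (\<lambda>n. \<sigma> (map a [0..<n])) in
        (\<forall>n. a n \<in> board_edges \<and> a n \<notin> A \<union> B \<union> a ` {..<n} \<union> m ` {..n}) \<longrightarrow>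
        (\<forall>n. m n \<in> board_edges \<and> m n \<notin> A \<union> B \<union> a ` {..<n} \<union> m ` {..<n}) \<and>
        (\<forall>n. has_copy G (A \<union> a ` {..n}) \<longrightarrow> has_copy G (B \<union> m ` {..n})))"

end

theory Submission
  imports Defs
begin


lemma cone_mem: "g \<in> cone3 (K2ts t s) \<longleftrightarrow> (\<exists>i<t. g = {Cen,MA,Lf i}) \<or> (\<exists>i<t. g = {Cen,MB,Lf i}) \<or> (\<exists>j<s. g = {Cen,MA,St j})"
  unfolding cone3_def K2ts_def by auto

lemma cone_Union: assumes "0 < t" shows "\<Union>(cone3 (K2ts t s)) = {Cen,MA,MB} \<union> Lf ` {..<t} \<union> St ` {..<s}"
proof
  show "\<Union>(cone3 (K2ts t s)) \<subseteq> {Cen,MA,MB} \<union> Lf ` {..<t} \<union> St ` {..<s}"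
    by (auto simp: cone_mem)
next
  have "{Cen,MA,Lf 0} \<in> cone3 (K2ts t s)" "{Cen,MB,Lf 0} \<in> cone3 (K2ts t s)"
    using assms by (auto simp: cone_mem)
  moreover have "\<And>i. i < t \<Longrightarrow> {Cen,MA,Lf i} \<in> cone3 (K2ts t s)"
     "\<And>j. j < s \<Longrightarrow> {Cen,MA,St j} \<in> cone3 (K2ts t s)" by (auto simp: cone_mem)
  ultimately show "{Cen,MA,MB} \<union> Lf ` {..<t} \<union> St ` {..<s} \<subseteq> \<Union>(cone3 (K2ts t s))"
    by blast
qed

lemma copy_mem: "h \<in> copy_edges G f \<longleftrightarrow> (\<exists>g\<in>G. h = f ` g)"
  unfolding copy_edges_def by auto

lemma three_in_two: "P \<in> {a,b} \<Longrightarrow> Q \<in> {a,b} \<Longrightarrow> R \<in> {a,b} \<Longrightarrow> P \<noteq> Q \<Longrightarrow> P \<noteq> R \<Longrightarrow> Q \<noteq> R \<Longrightarrow> False"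
  by auto

lemma key:
  fixes t :: nat and A B :: "nat set set" and f :: "kv \<Rightarrow> nat" and V :: "nat set" and e :: "nat set"
  assumes t3: "t \<ge> 3"
    and inj: "inj_on f (\<Union>(cone3 (K2ts (t+1) (t-2))))"
    and sub: "copy_edges (cone3 (K2ts (t+1) (t-2))) f - {e} \<subseteq> A \<union> (\<lambda>v. {c,x,v}) ` V"
    and fresh: "\<forall>v\<in>V. v \<notin> \<Union>A \<and> v \<noteq> c \<and> v \<noteq> x"
    and eA: "e \<notin> A" and eB: "e \<notin> B"
    and nA: "\<not> has_copy (cone3 (K2ts (t+1) (t-2))) A"
    and nthr: "\<not> threat t A B"
    and ii: "\<not> (\<exists>f. inj_on f (\<Union>(cone3 (K2ts t 0))) \<and> copy_edges (cone3 (K2ts t 0)) f \<subseteq> A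
            \<and> f Cen = c \<and> (f MA = x \<or> f MB = x))"
    and iii: "\<not> (\<exists>f. inj_on f (\<Union>(cone3 (K2ts t 0))) \<and> copy_edges (cone3 (K2ts t 0)) f \<subseteq> A
            \<and> f Cen = x \<and> (f MA = c \<or> f MB = c))"
  shows False
proof -
  define G where "G = cone3 (K2ts (t+1) (t-2))"
  define U where "U = \<Union>G"
  have U: "U = {Cen,MA,MB} \<union> Lf ` {..<t+1} \<union> St ` {..<t-2}"
    unfolding U_def G_def by (rule cone_Union) simp
  have injU: "inj_on f U" using inj unfolding U_def G_def .
  have memG: "g \<in> G \<longleftrightarrow> (\<exists>i<t+1. g = {Cen,MA,Lf i}) \<or> (\<exists>i<t+1. g = {Cen,MB,Lf i}) \<or> (\<exists>j<t-2. g = {Cen,MA,St j})" for g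
    unfolding G_def by (rule cone_mem)
  have fe: "f u = f w \<longleftrightarrow> u = w" if "u \<in> U" "w \<in> U" for u w
    using injU that by (meson inj_on_eq_iff)
  have cpy: "f ` g \<in> copy_edges G f" if "g \<in> G" for g
    using that unfolding copy_edges_def by auto
  have D: "f ` g = {c,x,f u} \<or> f ` g = e" if "u \<in> U" "f u \<in> V" "g \<in> G" "u \<in> g" for u g
  proof (rule ccontr)
    assume n: "\<not> ?thesis"
    then have "f ` g \<in> A \<union> (\<lambda>v. {c,x,v}) ` V" using sub cpy[OF that(3)] unfolding G_def by blast
    moreover have "f ` g \<notin> A" using fresh that by blast
    ultimately obtain v where v: "v \<in> V" "f ` g = {c,x,v}" by blast
    then have "f u \<in> {c,x,v}" using that by blast
    then have "f u = v" using fresh that by auto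
    then show False using n v by simp
  qed
  have Lf_in: "i < t+1 \<Longrightarrow> Lf i \<in> U" for i using U by auto
  have cen_in: "Cen \<in> U" "MA \<in> U" "MB \<in> U" using U by auto
  have eMA: "{Cen,MA,Lf i} \<in> G" "{Cen,MB,Lf i} \<in> G" if "i < t+1" for i using that memG by auto
  (* high-degree vertices are not fresh *)
  have nV: "f w \<notin> V" if w: "w \<in> {Cen,MA,MB}" for w
  proof
    assume wV: "f w \<in> V"
    define M where "M = (if w = MB then MB else MA)"
    have M: "M \<in> {MA,MB}" "w \<in> {Cen, M}" unfolding M_def using w by auto
    define E where "E i = {Cen, M, Lf i}" for i
    have EG: "E i \<in> G" if "i < t+1" for i using eMA[OF that] M unfolding E_def by auto
    have Ein: "f ` E i \<in> {{c,x,f w}, e}" if "i < t+1" for i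
      using D[OF _ wV EG[OF that]] M cen_in unfolding E_def by auto
    have Edist: "f ` E i \<noteq> f ` E j" if "i < t+1" "j < t+1" "i \<noteq> j" for i j
    proof
      assume "f ` E i = f ` E j"
      then have "f (Lf i) \<in> f ` E j" unfolding E_def by auto
      then show False using fe Lf_in[OF that(1)] Lf_in[OF that(2)] cen_in M that(3)
        unfolding E_def by auto
    qed
    show False
      using three_in_two[OF Ein[of 0] Ein[of 1] Ein[of 2]] Edist t3 by auto
  qed
  have good_contra: False if good: "M \<in> {MA,MB}" "{f Cen, f M} = {c,x}" for M
  proof -
    define L where "L = {i. i < t+1 \<and> (f ` {Cen,MA,Lf i} = e \<or> f ` {Cen,MB,Lf i} = e)}"
    have Luniq: "i = j" if iL: "i \<in> L" and jL: "j \<in> L" for i j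
    proof (rule ccontr)
      assume ij: "i \<noteq> j"
      have "f (Lf i) \<in> e" using iL unfolding L_def by auto
      moreover have "f (Lf i) \<notin> e"
      proof -
        obtain M' where M': "M' \<in> {MA,MB}" "e = f ` {Cen,M',Lf j}" using jL unfolding L_def by auto
        have i1: "i < t+1" "j < t+1" using iL jL unfolding L_def by auto
        have "f (Lf i) \<noteq> f Cen" "f (Lf i) \<noteq> f M'" "f (Lf i) \<noteq> f (Lf j)"
          using fe[OF Lf_in[OF i1(1)]] Lf_in[OF i1(2)] cen_in M' ij by auto
        then show ?thesis using M' by auto
      qed
      ultimately show False by blast
    qed
    obtain i0 where i0: "i0 \<le> t" "\<And>i. i < t+1 \<Longrightarrow> i \<noteq> i0 \<Longrightarrow> i \<notin> L"
    proof (cases "L = {}")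
      case True then show ?thesis using that[of t] by auto
    next
      case False
      then obtain i0 where "i0 \<in> L" by blast
      then show ?thesis using that[of i0] Luniq unfolding L_def by auto
    qed
    have inA: "f ` {Cen,MA,Lf i} \<in> A \<and> f ` {Cen,MB,Lf i} \<in> A" if "i < t+1" "i \<noteq> i0" for i
    proof -
      have ne: "f ` {Cen,MA,Lf i} \<noteq> e" "f ` {Cen,MB,Lf i} \<noteq> e" using i0(2)[OF that] that unfolding L_def by auto
      have dif: "f ` {Cen,MA,Lf i} \<noteq> f ` {Cen,MB,Lf i}"
      proof -
        have "f MA \<noteq> f Cen" "f MA \<noteq> f MB" "f MA \<noteq> f (Lf i)"
          using fe[OF cen_in(2)] Lf_in[OF that(1)] cen_in by auto
        then show ?thesis by auto
      qed
      have notF: "f (Lf i) \<notin> V"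
      proof
        assume "f (Lf i) \<in> V"
        then have "f ` {Cen,MA,Lf i} = {c,x,f (Lf i)}" "f ` {Cen,MB,Lf i} = {c,x,f (Lf i)}"
          using D[OF Lf_in[OF that(1)] _ eMA(1)[OF that(1)]] D[OF Lf_in[OF that(1)] _ eMA(2)[OF that(1)]] ne
          by auto
        then show False using dif by simp
      qed
      have "f ` {Cen,M',Lf i} \<in> A" if M': "M' \<in> {MA,MB}" for M'
      proof -
        have g: "{Cen,M',Lf i} \<in> G" using eMA \<open>i < t+1\<close> M' by auto
        have "f ` {Cen,M',Lf i} \<noteq> e" using ne M' by auto
        then have "f ` {Cen,M',Lf i} \<in> A \<union> (\<lambda>v. {c,x,v}) ` V" using sub cpy[OF g] unfolding G_def by blast
        moreover have "f ` {Cen,M',Lf i} \<notin> (\<lambda>v. {c,x,v}) ` V"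
        proof
          assume "f ` {Cen,M',Lf i} \<in> (\<lambda>v. {c,x,v}) ` V"
          then obtain v where v: "v \<in> V" "f ` {Cen,M',Lf i} = {c,x,v}" by blast
          then have "v \<in> {f Cen, f M', f (Lf i)}" by auto
          then show False using v(1) nV notF M' by auto
        qed
        ultimately show ?thesis by blast
      qed
      then show ?thesis by auto
    qed
    define r where "r w = (case w of Lf i \<Rightarrow> Lf (if i < i0 then i else Suc i) | _ \<Rightarrow> w)" for w
    define h where "h = f \<circ> r"
    have U0: "\<Union>(cone3 (K2ts t 0)) = {Cen,MA,MB} \<union> Lf ` {..<t}"
      using cone_Union[of t 0] t3 by auto
    have rU: "r ` (\<Union>(cone3 (K2ts t 0))) \<subseteq> U" unfolding U0 U r_def by auto
    have rinj: "inj_on r (\<Union>(cone3 (K2ts t 0)))"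
      unfolding U0 inj_on_def r_def by auto
    have hinj: "inj_on h (\<Union>(cone3 (K2ts t 0)))"
      unfolding h_def using comp_inj_on[OF rinj] inj_on_subset[OF injU rU] by blast
    have hcopy: "copy_edges (cone3 (K2ts t 0)) h \<subseteq> A"
    proof
      fix s assume "s \<in> copy_edges (cone3 (K2ts t 0)) h"
      then obtain g where g: "g \<in> cone3 (K2ts t 0)" "s = h ` g" unfolding copy_edges_def by auto
      then obtain i M' where iM: "i < t" "M' \<in> {MA,MB}" "g = {Cen,M',Lf i}" unfolding cone_mem by auto
      define j where "j = (if i < i0 then i else Suc i)"
      have j: "j < t+1" "j \<noteq> i0" using iM(1) unfolding j_def by auto
      have "s = f ` {Cen,M',Lf j}" using g(2) iM(2,3) unfolding h_def r_def j_def by auto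
      then show "s \<in> A" using inA[OF j] iM(2) by auto
    qed
    have hv: "h Cen = f Cen" "h MA = f MA" "h MB = f MB" unfolding h_def r_def by auto
    show False
    proof (cases "f Cen = c")
      case True
      then have "f M = x" using good fe cen_in by (auto simp: doubleton_eq_iff)
      then show False using ii hinj hcopy hv True good(1) by auto
    next
      case False
      then have "f Cen = x" "f M = c" using good by (auto simp: doubleton_eq_iff)
      then show False using iii hinj hcopy hv good(1) by auto
    qed
  qed
  show False
  proof (cases "\<exists>u g. u \<in> U \<and> f u \<in> V \<and> g \<in> G \<and> u \<in> g \<and> f ` g \<noteq> e")
    case True
    then obtain u g where ug: "u \<in> U" "f u \<in> V" "g \<in> G" "u \<in> g" "f ` g \<noteq> e" by blast
    have fg: "f ` g = {c,x,f u}" using D[OF ug(1-4)] ug(5) by auto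
    have unot: "u \<notin> {Cen,MA,MB}" using nV ug(2) by blast
    obtain M w where Mw: "M \<in> {MA,MB}" "g = {Cen,M,w}" using ug(3) unfolding memG by blast
    have uw: "u = w" using Mw ug(4) unot by auto
    have "f u \<noteq> f Cen" "f u \<noteq> f M" using fe ug(1) cen_in unot Mw(1) by auto
    moreover have "f u \<noteq> c" "f u \<noteq> x" using fresh ug(2) by auto
    moreover have "{f Cen, f M, f u} = {c,x,f u}" using fg Mw uw by auto
    ultimately have "{f Cen, f M} = {c,x}" by auto
    then show False using good_contra Mw(1) by blast
  next
    case False
    have SA: "copy_edges G f - {e} \<subseteq> A"
    proof
      fix s assume s: "s \<in> copy_edges G f - {e}"
      then obtain g where g: "g \<in> G" "s = f ` g" unfolding copy_edges_def by auto
      have "s \<in> A \<union> (\<lambda>v. {c,x,v}) ` V" using s sub unfolding G_def by blast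
      moreover have "s \<notin> (\<lambda>v. {c,x,v}) ` V"
      proof
        assume "s \<in> (\<lambda>v. {c,x,v}) ` V"
        then obtain v where v: "v \<in> V" "s = {c,x,v}" by blast
        then have "v \<in> f ` g" using g by auto
        then obtain u where "u \<in> g" "f u = v" by blast
        moreover have "u \<in> U" using \<open>u \<in> g\<close> g(1) unfolding U_def by blast
        ultimately show False using False g s v(1) by blast
      qed
      ultimately show "s \<in> A" by blast
    qed
    show False
    proof (cases "e \<in> copy_edges G f")
      case True
      have "threat t A B" unfolding threat_def
        apply (rule exI[of _ f], rule exI[of _ e])
        using True SA eA eB inj unfolding G_def by simp
      then show False using nthr by simp
    next
      case False
      then have "copy_edges G f \<subseteq> A" using SA by blast
      have "has_copy G A" unfolding has_copy_def
        apply (rule exI[of _ f]) using inj \<open>copy_edges G f \<subseteq> A\<close> unfolding G_def by simp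
      then show False using nA unfolding G_def by simp
    qed
  qed
qed



lemma extend_copy:
  fixes t :: nat and B X :: "nat set set" and g :: "kv \<Rightarrow> nat"
  assumes t3: "t \<ge> 3"
    and inj: "inj_on g (\<Union>(cone3 (K2ts t (t-2))))"
    and cp: "copy_edges (cone3 (K2ts t (t-2))) g \<subseteq> B"
    and gc: "g Cen = c" and gxy: "{g MA, g MB} = {x,y}"
    and vB: "v \<notin> \<Union>B"
    and BX: "B \<subseteq> X" and X1: "{c,x,v} \<in> X" and X2: "{c,y,v} \<in> X"
  shows "has_copy (cone3 (K2ts (t+1) (t-2))) X"
proof -
  define U0 where "U0 = \<Union>(cone3 (K2ts t (t-2)))"
  have U0: "U0 = {Cen,MA,MB} \<union> Lf ` {..<t} \<union> St ` {..<t-2}"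
    unfolding U0_def using cone_Union[of t "t-2"] t3 by auto
  have U1: "\<Union>(cone3 (K2ts (t+1) (t-2))) = insert (Lf t) U0"
    unfolding U0 cone_Union[of "t+1" "t-2", OF zero_less_Suc[of t, unfolded Suc_eq_plus1]]
    by (auto simp: lessThan_Suc)
  have LfU0: "Lf t \<notin> U0" unfolding U0 by auto
  have gU0: "g ` U0 \<subseteq> \<Union>B"
  proof
    fix z assume "z \<in> g ` U0"
    then obtain w where w: "w \<in> U0" "z = g w" by auto
    then obtain e where e: "e \<in> cone3 (K2ts t (t-2))" "w \<in> e" unfolding U0_def by auto
    then have "g ` e \<in> B" using cp unfolding copy_edges_def by auto
    then show "z \<in> \<Union>B" using e w by auto
  qed
  define f where "f = g(Lf t := v)"
  have finj0: "inj_on f U0" unfolding f_def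
    using inj_on_fun_updI[of g U0 v "Lf t"] inj gU0 vB unfolding U0_def by blast
  have fU0: "f ` U0 = g ` U0" unfolding f_def using LfU0 by auto
  have fLf: "f (Lf t) = v" unfolding f_def by simp
  have "f (Lf t) \<notin> f ` (U0 - {Lf t})" using LfU0 fU0 gU0 vB fLf by auto
  then have finj: "inj_on f (insert (Lf t) U0)"
    using finj0 LfU0 by (simp add: inj_on_insert)
  have fe: "f ` e = g ` e" if "e \<in> cone3 (K2ts t (t-2))" for e
  proof -
    have "e \<subseteq> U0" using that unfolding U0_def by auto
    then show ?thesis using LfU0 unfolding f_def by auto
  qed
  have "copy_edges (cone3 (K2ts (t+1) (t-2))) f \<subseteq> X"
  proof
    fix h assume "h \<in> copy_edges (cone3 (K2ts (t+1) (t-2))) f"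
    then obtain e where e: "e \<in> cone3 (K2ts (t+1) (t-2))" "h = f ` e" unfolding copy_edges_def by auto
    show "h \<in> X"
    proof (cases "e \<in> cone3 (K2ts t (t-2))")
      case True
      then have "h \<in> B" using fe e cp unfolding copy_edges_def by auto
      then show ?thesis using BX by auto
    next
      case False
      have "(\<exists>i<t+1. e = {Cen,MA,Lf i}) \<or> (\<exists>i<t+1. e = {Cen,MB,Lf i}) \<or> (\<exists>j<t-2. e = {Cen,MA,St j})"
        using e(1) unfolding cone_mem .
      moreover have "\<not> ((\<exists>i<t. e = {Cen,MA,Lf i}) \<or> (\<exists>i<t. e = {Cen,MB,Lf i}) \<or> (\<exists>j<t-2. e = {Cen,MA,St j}))"
        using False unfolding cone_mem .
      ultimately have "e = {Cen,MA,Lf t} \<or> e = {Cen,MB,Lf t}" by (metis less_antisym Suc_eq_plus1)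
      then obtain M where "M \<in> {MA,MB}" "e = {Cen,M,Lf t}" by blast
      then have "h = {c, g M, v}" using e(2) gc unfolding f_def by auto
      moreover have "g M \<in> {x,y}" using gxy \<open>M \<in> {MA,MB}\<close> by auto
      ultimately show ?thesis using X1 X2 by auto
    qed
  qed
  then show ?thesis unfolding has_copy_def U1 using finj by blast
qed



lemma sum_list_map_upt: "sum_list (map f [0..<n]) = (\<Sum>i<n. f i)"
  by (induct n) auto

theorem lemma4p1:
  fixes t :: nat and A B :: "nat set set" and x y c :: nat
  assumes "t \<ge> 3"
    and "finite A" and "finite B" and "A \<subseteq> board_edges" and "B \<subseteq> board_edges"
    and "A \<inter> B = {}" and "card A = Suc (card B)"
    and "\<not> has_copy (cone3 (K2ts (t+1) (t-2))) A"
    and "\<not> has_copy (cone3 (K2ts (t+1) (t-2))) B"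
    and "\<exists>f. inj_on f (\<Union>(cone3 (K2ts t (t-2)))) \<and> copy_edges (cone3 (K2ts t (t-2))) f \<subseteq> B
            \<and> f Cen = c \<and> {f MA, f MB} = {x, y}"
    and "\<not> threat t A B"
    and "\<not> (\<exists>f. inj_on f (\<Union>(cone3 (K2ts t 0))) \<and> copy_edges (cone3 (K2ts t 0)) f \<subseteq> A
            \<and> f Cen = c \<and> (f MA = x \<or> f MB = x))"
    and "\<not> (\<exists>f. inj_on f (\<Union>(cone3 (K2ts t 0))) \<and> copy_edges (cone3 (K2ts t 0)) f \<subseteq> A
            \<and> f Cen = x \<and> (f MA = c \<or> f MB = c))"
  shows "\<exists>\<sigma>. drawing_strategy_P2 (cone3 (K2ts (t+1) (t-2))) A B \<sigma>"
proof -
  note t3 = assms(1) and finA = assms(2) and finB = assms(3) and Abd = assms(4) and Bbd = assms(5)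
  note nA = assms(8) and nthr = assms(11) and ii = assms(12) and iii = assms(13)
  define G where "G = cone3 (K2ts (t+1) (t-2))"
  obtain g where g: "inj_on g (\<Union>(cone3 (K2ts t (t-2))))" "copy_edges (cone3 (K2ts t (t-2))) g \<subseteq> B"
    "g Cen = c" "{g MA, g MB} = {x, y}" using assms(10) by blast
  have U0: "\<Union>(cone3 (K2ts t (t-2))) = {Cen,MA,MB} \<union> Lf ` {..<t} \<union> St ` {..<t-2}"
    using cone_Union[of t "t-2"] t3 by auto
  have "g Cen \<noteq> g MA" "g Cen \<noteq> g MB" "g MA \<noteq> g MB"
    using g(1) unfolding U0 by (auto dest: inj_onD)
  then have cxy: "c \<noteq> x" "c \<noteq> y" "x \<noteq> y" using g(3,4) by (auto simp: doubleton_eq_iff)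
  have bd3: "card e = 3" if "e \<in> A \<union> B" for e using that Abd Bbd unfolding board_edges_def by auto
  have finU: "finite (\<Union>(A \<union> B))"
  proof (rule finite_Union)
    show "finite (A \<union> B)" using finA finB by simp
    show "\<And>E. E \<in> A \<union> B \<Longrightarrow> finite E" using bd3 card_ge_0_finite by (metis zero_less_numeral)
  qed
  define N where "N = Suc (Max (insert c (insert x (insert y (\<Union>(A \<union> B))))))"
  have Nbig: "z < N" if "z \<in> insert c (insert x (insert y (\<Union>(A \<union> B))))" for z
  proof -
    have "finite (insert c (insert x (insert y (\<Union>(A \<union> B)))))" using finU by simp
    then have "z \<le> Max (insert c (insert x (insert y (\<Union>(A \<union> B)))))" using that by (rule Max_ge)
    then show ?thesis unfolding N_def by simp
  qed
  have cN: "c < N" "x < N" "y < N" using Nbig by auto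
  have ABN: "z < N" if "E \<in> A \<union> B" "z \<in> E" for E z using Nbig that by blast
  define fc where "fc j = {c,x,N+j}" for j
  define p2 where "p2 j = {c,y,N+j}" for j
  define MM where "MM as = N + 3 * length as + sum_list (map Max as)" for as :: "nat set list"
  define fr where "fr as = {MM as, MM as + 1, MM as + 2}" for as
  define \<sigma> where "\<sigma> as = (if \<forall>j<length as. as!j = fc j then p2 (length as)
      else (let k = (LEAST j. j < length as \<and> as!j \<noteq> fc j) in
            if length as = Suc k then fc k else fr as))" for as
  have "drawing_strategy_P2 G A B \<sigma>"
    unfolding drawing_strategy_P2_def Let_def
  proof (intro allI impI)
    fix a :: "nat \<Rightarrow> nat set"
    define m where "m = (\<lambda>n. \<sigma> (map a [0..<n]))"
    assume leg0: "\<forall>n. a n \<in> board_edges \<and> a n \<notin> A \<union> B \<union> a ` {..<n} \<union> (\<lambda>n. \<sigma> (map a [0..<n])) ` {..n}"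
    have leg: "a n \<in> board_edges" "a n \<notin> A \<union> B \<union> a ` {..<n} \<union> m ` {..n}" for n
      using leg0 unfolding m_def by auto
    define S where "S n = (\<Sum>i<n. Max (a i))" for n
    define Mn where "Mn n = N + 3 * n + S n" for n
    have MM: "MM (map a [0..<n]) = Mn n" for n
      unfolding MM_def Mn_def S_def by (simp add: sum_list_map_upt)
    define ND where "ND n = (\<forall>j<n. a j = fc j)" for n
    have mform: "(ND n \<and> m n = p2 n) \<or> (\<exists>k<n. a k \<noteq> fc k \<and> ND k \<and>
        ((n = Suc k \<and> m n = fc k) \<or> (Suc k < n \<and> m n = {Mn n, Mn n + 1, Mn n + 2})))" for n
    proof (cases "ND n")
      case True
      then show ?thesis unfolding m_def \<sigma>_def ND_def by auto
    next
      case False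
      then obtain k0 where k0: "k0 < n" "a k0 \<noteq> fc k0" unfolding ND_def by auto
      define k where "k = (LEAST k. a k \<noteq> fc k)"
      have k: "a k \<noteq> fc k" unfolding k_def using k0(2) by (rule LeastI)
      have kle: "k \<le> k0" unfolding k_def using k0(2) by (rule Least_le)
      have NDk: "ND k" unfolding ND_def k_def using not_less_Least by blast
      have L: "(LEAST j. j < length (map a [0..<n]) \<and> (map a [0..<n])!j \<noteq> fc j) = k"
      proof (rule Least_equality)
        show "k < length (map a [0..<n]) \<and> map a [0..<n] ! k \<noteq> fc k" using k kle k0 by auto
      next
        fix j assume "j < length (map a [0..<n]) \<and> map a [0..<n] ! j \<noteq> fc j"
        then show "k \<le> j" using NDk unfolding ND_def by (metis length_map diff_zero length_upt nth_map_upt add_0 not_le)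
      qed
      have nall: "\<not> (\<forall>j<length (map a [0..<n]). map a [0..<n] ! j = fc j)" using k0 by auto
      have "\<sigma> (map a [0..<n]) = (if length (map a [0..<n]) = Suc k then fc k else fr (map a [0..<n]))"
        by (simp only: \<sigma>_def if_not_P[OF nall] Let_def L)
      then have "m n = (if n = Suc k then fc k else fr (map a [0..<n]))"
        unfolding m_def by simp
      then show ?thesis using k NDk kle k0 MM unfolding fr_def by (intro disjI2 exI[of _ k]) auto
    qed
    have Mmono: "Mn j + 3 \<le> Mn n" if "j < n" for j n
    proof -
      have "S j \<le> S n" unfolding S_def by (rule sum_mono2) (use that in auto)
      then show ?thesis unfolding Mn_def using that by simp
    qed
    have aMax: "z < Mn n" if "j < n" "z \<in> a j" for j n z
    proof -
      have "finite (a j)" using leg(1)[of j] unfolding board_edges_def by (auto intro: card_ge_0_finite)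
      then have "z \<le> Max (a j)" using that(2) by simp
      also have "Max (a j) \<le> S n" unfolding S_def using that(1) by (intro member_le_sum) auto
      finally show ?thesis unfolding Mn_def using that(1) by simp
    qed
    have nonempty: "\<exists>z. z \<in> E" if "card E = 3" for E :: "nat set" using that by (cases "E = {}") auto
    have card3: "card {p,q,r} = 3" if "p \<noteq> q" "p \<noteq> r" "q \<noteq> r" for p q r :: nat using that by simp
    have NDle: "ND j" if "ND n" "j \<le> n" for j n using that unfolding ND_def by auto
    have legm: "m n \<in> board_edges \<and> m n \<notin> A \<union> B \<union> a ` {..<n} \<union> m ` {..<n}" for n
    proof (cases "ND n")
      case True
      then have mn: "m n = p2 n" using mform[of n] NDle unfolding ND_def by auto
      have mj: "m j = p2 j" if "j < n" for j using mform[of j] True that unfolding ND_def by auto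
      have bd: "m n \<in> board_edges" unfolding mn p2_def board_edges_def using cxy cN by (intro CollectI card3) auto
      have "m n \<notin> A \<union> B" using ABN[of "m n" "N+n"] unfolding mn p2_def by auto
      moreover have "m n \<notin> a ` {..<n}" using True cxy cN unfolding ND_def mn p2_def fc_def by auto
      moreover have "m n \<notin> m ` {..<n}"
      proof
        assume "m n \<in> m ` {..<n}"
        then obtain j where j: "j < n" "p2 n = p2 j" using mj mn by auto
        then have "N + n \<in> {c,y,N+j}" unfolding p2_def by blast
        then show False using j(1) cN by auto
      qed
      ultimately show ?thesis using bd by blast
    next
      case False
      then obtain k where k: "k < n" "a k \<noteq> fc k" "ND k"
        "(n = Suc k \<and> m n = fc k) \<or> (Suc k < n \<and> m n = {Mn n, Mn n + 1, Mn n + 2})"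
        using mform[of n] by blast
      show ?thesis
      proof (cases "n = Suc k")
        case True
        then have mn: "m n = fc k" using k by auto
        have mj: "m j = p2 j" if "j < n" for j
        proof -
          have NDj: "ND j" using NDle[OF k(3)] that True by auto
          show ?thesis using mform[of j] NDj unfolding ND_def by blast
        qed
        have bd: "m n \<in> board_edges" unfolding mn fc_def board_edges_def using cxy cN by (intro CollectI card3) auto
        have "m n \<notin> A \<union> B" using ABN[of "m n" "N+k"] unfolding mn fc_def by auto
        moreover have "m n \<notin> a ` {..<n}"
        proof
          assume "m n \<in> a ` {..<n}"
          then obtain j where j: "j < n" "a j = fc k" using mn by auto
          show False
          proof (cases "j = k")
            case True then show False using j k by simp
          next
            case False
            then have "j < k" using j True by simp
            then have "a j = fc j" using k(3) unfolding ND_def by simp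
            then show False using j \<open>j < k\<close> cN cxy unfolding fc_def by (auto simp: insert_eq_iff)
          qed
        qed
        moreover have "m n \<notin> m ` {..<n}"
        proof
          assume "m n \<in> m ` {..<n}"
          then obtain j where j: "j < n" "fc k = p2 j" using mj mn by auto
          then have "x \<in> {c,y,N+j}" unfolding p2_def fc_def by blast
          then show False using cxy cN by auto
        qed
        ultimately show ?thesis using bd by blast
      next
        case False
        then have mn: "m n = {Mn n, Mn n + 1, Mn n + 2}" and kn: "Suc k < n" using k by auto
        have bd: "m n \<in> board_edges" unfolding mn board_edges_def by simp
        have low: "m n \<noteq> E" if "z \<in> E" "z < Mn n" for E z using that unfolding mn by auto
        have "m n \<notin> A \<union> B"
        proof
          assume "m n \<in> A \<union> B"
          then have "m n \<in> A \<union> B" .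
          then show False using ABN[of "m n" "Mn n"] unfolding mn Mn_def by auto
        qed
        moreover have "m n \<notin> a ` {..<n}"
        proof
          assume "m n \<in> a ` {..<n}"
          then obtain j where j: "j < n" "m n = a j" by auto
          then show False using aMax[of j n "Mn n"] unfolding mn by auto
        qed
        moreover have "m n \<notin> m ` {..<n}"
        proof
          assume "m n \<in> m ` {..<n}"
          then obtain j where j: "j < n" "m n = m j" by auto
          have "c \<in> m j \<or> m j = {Mn j, Mn j + 1, Mn j + 2}"
            using mform[of j] unfolding p2_def fc_def by auto
          then show False
          proof
            assume "c \<in> m j" then show False using low[of c "m j"] j cN unfolding Mn_def by auto
          next
            assume "m j = {Mn j, Mn j + 1, Mn j + 2}"
            then show False using low[of "Mn j" "m j"] j Mmono[OF j(1)] by auto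
          qed
        qed
        ultimately show ?thesis using bd by blast
      qed
    qed
    have freshV: "\<forall>v\<in>(\<lambda>j. N+j) ` J. v \<notin> \<Union>A \<and> v \<noteq> c \<and> v \<noteq> x" for J
      using ABN cN by fastforce
    have emp: "{} \<notin> A" "{} \<notin> B" using bd3 by fastforce+
    have fcimg: "fc ` J = (\<lambda>v. {c,x,v}) ` ((\<lambda>j. N+j) ` J)" for J by (simp add: image_image fc_def)
    have win: "has_copy G (B \<union> m ` {..n})" if hc: "has_copy G (A \<union> a ` {..n})" for n
    proof -
      obtain f where f: "inj_on f (\<Union>G)" "copy_edges G f \<subseteq> A \<union> a ` {..n}"
        using hc unfolding has_copy_def by blast
      show ?thesis
      proof (cases "ND (Suc n)")
        case True
        have "a ` {..n} = fc ` {..n}" by (rule image_cong) (use True in \<open>auto simp: ND_def\<close>)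
        then have "copy_edges G f - {{}} \<subseteq> A \<union> (\<lambda>v. {c,x,v}) ` ((\<lambda>j. N+j) ` {..n})"
          using f(2) fcimg by auto
        then have False using key[OF t3 f(1)[unfolded G_def] _ freshV emp nA nthr ii iii] unfolding G_def by blast
        then show ?thesis ..
      next
        case False
        define k where "k = (LEAST k. a k \<noteq> fc k)"
        obtain k0 where k0: "k0 < Suc n" "a k0 \<noteq> fc k0" using False unfolding ND_def by auto
        have k: "a k \<noteq> fc k" unfolding k_def using k0(2) by (rule LeastI)
        have kle: "k \<le> n" using Least_le[of "\<lambda>k. a k \<noteq> fc k", OF k0(2)] k0(1) unfolding k_def by simp
        have NDk: "ND k" unfolding ND_def k_def using not_less_Least by blast
        show ?thesis
        proof (cases "k = n")
          case True
          have "a ` {..<n} = fc ` {..<n}" by (rule image_cong) (use NDk True in \<open>auto simp: ND_def\<close>)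
          moreover have "{..n} = insert n {..<n}" by auto
          ultimately have "copy_edges G f - {a n} \<subseteq> A \<union> (\<lambda>v. {c,x,v}) ` ((\<lambda>j. N+j) ` {..<n})"
            using f(2) fcimg by auto
          moreover have "a n \<notin> A" "a n \<notin> B" using leg(2)[of n] by auto
          ultimately have False using key[OF t3 f(1)[unfolded G_def] _ freshV _ _ nA nthr ii iii] unfolding G_def by blast
          then show ?thesis ..
        next
          case False
          then have kn: "Suc k \<le> n" using kle by simp
          have m1: "m k = p2 k" using mform[of k] NDk unfolding ND_def by blast
          have m2: "m (Suc k) = fc k"
          proof -
            have "\<not> ND (Suc k)" using k unfolding ND_def by auto
            then obtain k' where k': "k' < Suc k" "a k' \<noteq> fc k'"
              "(Suc k = Suc k' \<and> m (Suc k) = fc k') \<or> (Suc k' < Suc k \<and> m (Suc k) = {Mn (Suc k), Mn (Suc k) + 1, Mn (Suc k) + 2})"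
              using mform[of "Suc k"] by blast
            have "\<not> k' < k" using NDk k'(2) unfolding ND_def by auto
            then have "k' = k" using k'(1) by simp
            then show ?thesis using k'(3) by simp
          qed
          have X1: "{c,x,N+k} \<in> B \<union> m ` {..n}" using m2 kn unfolding fc_def by (metis UnI2 atMost_iff image_eqI)
          have X2: "{c,y,N+k} \<in> B \<union> m ` {..n}" using m1 kn unfolding p2_def by (metis UnI2 atMost_iff image_eqI Suc_leD)
          have vB: "N + k \<notin> \<Union>B" using ABN by fastforce
          show ?thesis unfolding G_def
            by (rule extend_copy[OF t3 g(1) g(2) g(3) g(4) vB _ X1 X2]) auto
        qed
      qed
    qed
    have "(\<forall>n. m n \<in> board_edges \<and> m n \<notin> A \<union> B \<union> a ` {..<n} \<union> m ` {..<n}) \<and>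
          (\<forall>n. has_copy G (A \<union> a ` {..n}) \<longrightarrow> has_copy G (B \<union> m ` {..n}))"
      using legm win by blast
    then show "(\<forall>n. \<sigma> (map a [0..<n]) \<in> board_edges \<and> \<sigma> (map a [0..<n]) \<notin> A \<union> B \<union> a ` {..<n} \<union> (\<lambda>n. \<sigma> (map a [0..<n])) ` {..<n}) \<and>
          (\<forall>n. has_copy G (A \<union> a ` {..n}) \<longrightarrow> has_copy G (B \<union> (\<lambda>n. \<sigma> (map a [0..<n])) ` {..n}))"
      unfolding m_def by simp
  qed
  then show ?thesis unfolding G_def by blast
qed

end
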